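(* Let $k\ge 2$ be even, $\gamma>0$, and let $p\in\Delta([k])$ satisfy $d_{TV}(p,u)>\gamma$. Let $S$ be a uniformly random subset of $[k]$ of cardinality $k/2$. Then $$\Pr\Big[\Big|p(S)-\tfrac12\Big|>\frac{\gamma}{\sqrt{5k}}\Big]>\frac{1}{477}.$$
   Context: $\Delta([k])$ is the set of probability distributions on $[k]=\{1,\dots,k\}$, $u$ is the uniform distribution on $[k]$, $d_{TV}(p,q)=\frac12\|p-q\|_1$, and $p(S)=\sum_{x\in S}p(x)$. *)

theory Defs
  imports "HOL-Probability.Probability"
begin

definition in_simplex :: "nat \<Rightarrow> (nat \<Rightarrow> real) \<Rightarrow> bool" where
  "in_simplex k p \<longleftrightarrow> (\<forall>i\<in>{1..k}. p i \<ge> 0) \<and> (\<Sum>i\<in>{1..k}. p i) = 1"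

definition unif :: "nat \<Rightarrow> nat \<Rightarrow> real" where
  "unif k i = 1 / real k"

definition d_TV :: "nat \<Rightarrow> (nat \<Rightarrow> real) \<Rightarrow> (nat \<Rightarrow> real) \<Rightarrow> real" where
  "d_TV k p q = (1/2) * (\<Sum>i\<in>{1..k}. \<bar>p i - q i\<bar>)"

definition pset :: "(nat \<Rightarrow> real) \<Rightarrow> nat set \<Rightarrow> real" where
  "pset p S = (\<Sum>x\<in>S. p x)"

definition rand_subset :: "nat \<Rightarrow> nat \<Rightarrow> nat set pmf" where
  "rand_subset k m = pmf_of_set {S. S \<subseteq> {1..k} \<and> card S = m}"

end

theory Submission imports Defs begin
lemma odd_sum_zero:
  fixes g :: "'a \<Rightarrow> real"
  assumes inv: "\<And>f::'a\<Rightarrow>real. (\<Sum>x\<in>P. f (t x)) = (\<Sum>x\<in>P. f x)"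
    and flip: "\<And>x. x \<in> P \<Longrightarrow> g (t x) = - g x"
  shows "(\<Sum>x\<in>P. g x) = 0"
proof -
  have "(\<Sum>x\<in>P. g x) = (\<Sum>x\<in>P. g (t x))" using inv[of g] by simp
  also have "\<dots> = (\<Sum>x\<in>P. - g x)" by (rule sum.cong) (auto simp: flip)
  finally show ?thesis by (simp add: sum_negf)
qed

lemma moments:
  fixes P :: "'a set" and tau :: "nat \<Rightarrow> 'a \<Rightarrow> 'a" and c :: "nat \<Rightarrow> 'a \<Rightarrow> real"
  assumes inv: "\<And>j (f::'a\<Rightarrow>real). j \<in> {1..m} \<Longrightarrow> (\<Sum>x\<in>P. f (tau j x)) = (\<Sum>x\<in>P. f x)"
    and cflip: "\<And>i j x. i \<in> {1..m} \<Longrightarrow> j \<in> {1..m} \<Longrightarrow> x \<in> P \<Longrightarrow>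
        c i (tau j x) = (if i = j then - c i x else c i x)"
  shows "r \<le> m \<Longrightarrow> (\<forall>h. (\<forall>j\<in>{1..r}. \<forall>x\<in>P. h (tau j x) = h x) \<longrightarrow>
     (\<Sum>x\<in>P. h x * (\<Sum>j=1..r. c j x)^2) = (\<Sum>x\<in>P. h x * (\<Sum>j=1..r. (c j x)^2)) \<and>
     ((\<forall>x\<in>P. h x \<ge> 0) \<longrightarrow> (\<Sum>x\<in>P. h x * (\<Sum>j=1..r. c j x)^4) \<le> 3 * (\<Sum>x\<in>P. h x * (\<Sum>j=1..r. (c j x)^2)^2)))"
proof (induction r)
  case 0
  then show ?case by simp
next
  case (Suc r)
  show ?case
  proof (intro allI impI conjI)
    fix h :: "'a \<Rightarrow> real"
    assume hinv: "\<forall>j\<in>{1..Suc r}. \<forall>x\<in>P. h (tau j x) = h x"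
    define Y where "Y x = (\<Sum>j=1..r. c j x)" for x
    define W where "W x = (\<Sum>j=1..r. (c j x)^2)" for x
    define d where "d x = c (Suc r) x" for x
    have sr: "Suc r \<in> {1..m}" using Suc.prems by auto
    have Yinv: "Y (tau (Suc r) x) = Y x" if "x \<in> P" for x
      unfolding Y_def using that Suc.prems by (intro sum.cong) (auto simp: cflip)
    have dflip: "d (tau (Suc r) x) = - d x" if "x \<in> P" for x
      unfolding d_def using that sr by (simp add: cflip)
    have hinv': "h (tau (Suc r) x) = h x" if "x \<in> P" for x using hinv that by auto
    have IH: "\<And>h. (\<forall>j\<in>{1..r}. \<forall>x\<in>P. h (tau j x) = h x) \<Longrightarrow>
     (\<Sum>x\<in>P. h x * Y x ^2) = (\<Sum>x\<in>P. h x * W x) \<and>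
     ((\<forall>x\<in>P. h x \<ge> 0) \<longrightarrow> (\<Sum>x\<in>P. h x * Y x^4) \<le> 3 * (\<Sum>x\<in>P. h x * W x^2))"
      using Suc.IH Suc.prems unfolding Y_def W_def by auto
    have h1: "\<forall>j\<in>{1..r}. \<forall>x\<in>P. h (tau j x) = h x" using hinv by auto
    have hd: "\<forall>j\<in>{1..r}. \<forall>x\<in>P. (h (tau j x) * d (tau j x)^2) = h x * d x ^2"
    proof (intro ballI)
      fix j x assume j: "j \<in> {1..r}" and x: "x \<in> P"
      have "d (tau j x) ^2 = d x ^2" unfolding d_def using j x Suc.prems
        by (cases "Suc r = j") (auto simp: cflip)
      then show "(h (tau j x) * d (tau j x)^2) = h x * d x ^2" using h1 j x by auto
    qed
    have z1: "(\<Sum>x\<in>P. h x * Y x * d x) = 0"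
      apply (rule odd_sum_zero[where t="tau (Suc r)"])
       apply (rule inv[OF sr]) by (auto simp: hinv' Yinv dflip)
    have z3: "(\<Sum>x\<in>P. h x * Y x ^ 3 * d x) = 0"
      apply (rule odd_sum_zero[where t="tau (Suc r)"])
       apply (rule inv[OF sr]) by (auto simp: hinv' Yinv dflip)
    have z3': "(\<Sum>x\<in>P. h x * Y x * d x ^ 3) = 0"
      apply (rule odd_sum_zero[where t="tau (Suc r)"])
       apply (rule inv[OF sr]) by (auto simp: hinv' Yinv dflip)
    have YS: "(\<Sum>j=1..Suc r. c j x) = Y x + d x" for x unfolding Y_def d_def by simp
    have WS: "(\<Sum>j=1..Suc r. (c j x)^2) = W x + d x ^ 2" for x unfolding W_def d_def by simp
    have e2: "(\<Sum>x\<in>P. h x * (Y x + d x)^2) = (\<Sum>x\<in>P. h x * Y x ^2) + 2 * (\<Sum>x\<in>P. h x * Y x * d x) + (\<Sum>x\<in>P. h x * d x ^ 2)"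
      by (simp add: power2_eq_square algebra_simps sum.distrib sum_distrib_left)
    show "(\<Sum>x\<in>P. h x * (\<Sum>j=1..Suc r. c j x)^2) = (\<Sum>x\<in>P. h x * (\<Sum>j=1..Suc r. (c j x)^2))"
      unfolding YS WS e2 z1 using IH[OF h1]
      by (simp add: algebra_simps sum.distrib)
    assume hpos: "\<forall>x\<in>P. h x \<ge> 0"
    have IH2: "(\<Sum>x\<in>P. (h x * d x^2) * Y x ^2) = (\<Sum>x\<in>P. (h x * d x^2) * W x)"
      using IH[of "\<lambda>x. h x * d x^2"] hd by blast
    have IH4: "(\<Sum>x\<in>P. h x * Y x^4) \<le> 3 * (\<Sum>x\<in>P. h x * W x^2)" using IH[OF h1] hpos by blast
    have e4: "(\<Sum>x\<in>P. h x * (Y x + d x)^4) = (\<Sum>x\<in>P. h x * Y x ^4) + 4 * (\<Sum>x\<in>P. h x * Y x ^ 3 * d x)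
        + 6 * (\<Sum>x\<in>P. (h x * d x^2) * Y x ^2) + 4 * (\<Sum>x\<in>P. h x * Y x * d x ^ 3) + (\<Sum>x\<in>P. h x * d x ^ 4)"
      by (simp add: power_def numeral_eq_Suc algebra_simps sum.distrib sum_distrib_left)
    have e4': "3 * (\<Sum>x\<in>P. h x * (W x + d x^2)^2) = 3 * (\<Sum>x\<in>P. h x * W x ^2)
        + 6 * (\<Sum>x\<in>P. (h x * d x^2) * W x) + 3 * (\<Sum>x\<in>P. h x * d x ^ 4)"
      by (simp add: power_def numeral_eq_Suc algebra_simps sum.distrib sum_distrib_left)
    have pos: "(\<Sum>x\<in>P. h x * d x ^ 4) \<ge> 0" using hpos by (auto intro!: sum_nonneg)
    show "(\<Sum>x\<in>P. h x * (\<Sum>j=1..Suc r. c j x)^4) \<le> 3 * (\<Sum>x\<in>P. h x * (\<Sum>j=1..Suc r. (c j x)^2)^2)"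
      unfolding YS WS e4 e4' z3 z3' IH2 using IH4 pos by linarith
  qed
qed

lemma sum_split_pairs:
  fixes f :: "nat \<Rightarrow> real"
  shows "(\<Sum>i=1..2*m. f i) = (\<Sum>j=1..m. f (2*j-1) + f (2*j))"
proof (induction m)
  case 0 then show ?case by simp
next
  case (Suc m)
  have "{1..2*Suc m} = insert (2*m+2) (insert (2*m+1) {1..2*m})" by auto
  then have "(\<Sum>i=1..2*Suc m. f i) = f (2*m+2) + f (2*m+1) + (\<Sum>i=1..2*m. f i)" by simp
  then show ?case using Suc by (simp add: algebra_simps)
qed

lemma perm_sum_inv:
  assumes "\<pi> permutes K"
  shows "(\<Sum>i\<in>K. g (\<pi> i)) = (\<Sum>i\<in>K. (g i::real))"
  using sum.reindex_bij_betw[OF permutes_imp_bij[OF assms], of g] by simp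

lemma pair_neg:
  fixes q :: "nat \<Rightarrow> real"
  assumes fin: "finite K" and a: "a \<in> K" and b: "b \<in> K" and ab: "a \<noteq> b"
    and q0: "(\<Sum>i\<in>K. q i) = 0"
  shows "(\<Sum>\<pi>\<in>{\<pi>. \<pi> permutes K}. q (\<pi> a) * q (\<pi> b)) \<le> 0"
proof -
  let ?P = "{\<pi>. \<pi> permutes K}"
  define F where "F = (\<Sum>\<pi>\<in>?P. q (\<pi> a) * q (\<pi> b))"
  have eq: "(\<Sum>\<pi>\<in>?P. q (\<pi> a) * q (\<pi> b')) = F" if b': "b' \<in> K - {a}" for b'
  proof -
    have tp: "Transposition.transpose b b' permutes K" using b b' by (auto intro: permutes_swap_id)
    have "F = (\<Sum>\<pi>\<in>?P. q ((\<pi> \<circ> Transposition.transpose b b') a) * q ((\<pi> \<circ> Transposition.transpose b b') b))"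
      unfolding F_def by (rule sum_permutations_compose_right[OF tp])
    also have "\<dots> = (\<Sum>\<pi>\<in>?P. q (\<pi> a) * q (\<pi> b'))"
      using ab b' by (intro sum.cong) (auto simp: transpose_def)
    finally show ?thesis by simp
  qed
  have "0 = (\<Sum>\<pi>\<in>?P. q (\<pi> a) * (\<Sum>i\<in>K. q (\<pi> i)))"
    using q0 by (intro sum.neutral[symmetric]) (auto simp: perm_sum_inv)
  also have "\<dots> = (\<Sum>\<pi>\<in>?P. q (\<pi> a) ^ 2 + (\<Sum>i\<in>K-{a}. q (\<pi> a) * q (\<pi> i)))"
    using a fin by (intro sum.cong) (auto simp: sum.remove power2_eq_square distrib_left sum_distrib_left)
  also have "\<dots> = (\<Sum>\<pi>\<in>?P. q (\<pi> a) ^ 2) + (\<Sum>i\<in>K-{a}. \<Sum>\<pi>\<in>?P. q (\<pi> a) * q (\<pi> i))"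
    by (simp add: sum.distrib sum.swap[of _ _ "K-{a}"])
  also have "\<dots> = (\<Sum>\<pi>\<in>?P. q (\<pi> a) ^ 2) + real (card (K-{a})) * F"
    using eq by simp
  finally have "real (card (K-{a})) * F = - (\<Sum>\<pi>\<in>?P. q (\<pi> a) ^ 2)" by linarith
  moreover have "card (K-{a}) > 0" using fin a b ab
    by (metis card_gt_0_iff empty_iff finite_Diff insert_Diff insert_iff)
  moreover have "(\<Sum>\<pi>\<in>?P. q (\<pi> a) ^ 2) \<ge> 0" by (auto intro: sum_nonneg)
  ultimately show ?thesis unfolding F_def
    by (smt (verit, best) mult_pos_pos of_nat_0_less_iff)
qed

lemma exists_perm_image:
  fixes K S S' :: "nat set"
  assumes fin: "finite K" and S: "S \<subseteq> K" and S': "S' \<subseteq> K" and c: "card S = card S'"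
  shows "\<exists>\<sigma>. \<sigma> permutes K \<and> \<sigma> ` S = S'"
proof -
  have fS: "finite S" "finite S'" using fin S S' finite_subset by auto
  obtain g where g: "bij_betw g S S'" using finite_same_card_bij[OF fS c] by blast
  have c2: "card (K - S) = card (K - S')" using c S S' fin by (simp add: card_Diff_subset fS)
  obtain h where h: "bij_betw h (K-S) (K-S')" using finite_same_card_bij[OF _ _ c2] fin by blast
  define \<sigma> where "\<sigma> x = (if x \<in> S then g x else if x \<in> K then h x else x)" for x
  have b1: "bij_betw \<sigma> S S'" using g by (rule bij_betw_cong[THEN iffD1, rotated]) (auto simp: \<sigma>_def)
  have b2: "bij_betw \<sigma> (K-S) (K-S')" using h by (rule bij_betw_cong[THEN iffD1, rotated]) (auto simp: \<sigma>_def)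
  have "bij_betw \<sigma> (S \<union> (K-S)) (S' \<union> (K-S'))" by (rule bij_betw_combine[OF b1 b2]) auto
  then have "bij_betw \<sigma> K K" using S S' by (simp add: Un_absorb1 Un_absorb2)
  then have "\<sigma> permutes K" by (rule bij_imp_permutes) (use S in \<open>auto simp: \<sigma>_def\<close>)
  moreover have "\<sigma> ` S = S'" using b1 by (simp add: bij_betw_def)
  ultimately show ?thesis by blast
qed

lemma sqhelp: fixes a b :: real shows "((a-b)/2)^2 \<le> (a^2+b^2)/2"
proof -
  have "0 \<le> (a+b)^2" by simp
  moreover have "((a-b)/2)^2 = (a^2+b^2)/2 - (a+b)^2/4" by (simp add: power2_eq_square field_simps)
  ultimately show ?thesis by linarith
qed
theorem corollary4p2:
  fixes k :: nat and \<gamma> :: real and p :: "nat \<Rightarrow> real"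
  assumes "even k" and "k \<ge> 2" and "\<gamma> > 0"
    and "in_simplex k p"
    and "d_TV k p (unif k) > \<gamma>"
  shows "measure_pmf.prob (rand_subset k (k div 2))
           {S. \<bar>pset p S - 1/2\<bar> > \<gamma> / sqrt (5 * real k)} > 1/477"
proof -
  note ev = assms(1) and k2 = assms(2) and gpos = assms(3) and simp = assms(4) and tv = assms(5)
  define m where "m = k div 2"
  have km: "k = 2*m" using ev unfolding m_def by simp
  have m1: "m \<ge> 1" using k2 km by simp
  define K where "K = {1..k}"
  define q where "q i = p i - 1/real k" for i
  define P where "P = {\<pi>. \<pi> permutes K}"
  define tau where "tau j \<pi> = \<pi> \<circ> Transposition.transpose (2*j-1) (2*j)" for j and \<pi> :: "nat \<Rightarrow> nat"
  define c where "c j \<pi> = (q (\<pi> (2*j-1)) - q (\<pi> (2*j)))/2" for j :: nat and \<pi> :: "nat \<Rightarrow> nat"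
  define X where "X \<pi> = (\<Sum>j=1..m. q (\<pi> (2*j-1)))" for \<pi> :: "nat \<Rightarrow> nat"
  define W where "W \<pi> = (\<Sum>j=1..m. (c j \<pi>)^2)" for \<pi> :: "nat \<Rightarrow> nat"
  define s where "s = (\<Sum>i\<in>K. q i ^2)"
  define t where "t = \<gamma> / sqrt (5 * real k)"
  have finK: "finite K" unfolding K_def by simp
  have kpos: "real k > 0" using k2 by simp
  have q0: "(\<Sum>i\<in>K. q i) = 0"
  proof -
    have "(\<Sum>i\<in>K. q i) = (\<Sum>i\<in>K. p i) - real k * (1/real k)"
      unfolding q_def K_def by (simp add: sum_subtractf)
    also have "\<dots> = 0" using simp kpos unfolding in_simplex_def K_def by simp
    finally show ?thesis .
  qed
  have posK: "2*j-1 \<in> K" "2*j \<in> K" if "j \<in> {1..m}" for j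
    using that km unfolding K_def by auto
  have finP: "finite P" unfolding P_def using finK by (rule finite_permutations)
  have idP: "id \<in> P" unfolding P_def by (simp add: permutes_id)
  have NP: "card P > 0" using finP idP card_gt_0_iff by blast
  have inv: "(\<Sum>\<pi>\<in>P. f (tau j \<pi>)) = (\<Sum>\<pi>\<in>P. f \<pi>)" if "j \<in> {1..m}" for j and f :: "_ \<Rightarrow> real"
  proof -
    have "Transposition.transpose (2*j-1) (2*j) permutes K"
      using posK[OF that] by (rule permutes_swap_id)
    from sum_permutations_compose_right[OF this, of f] show ?thesis
      unfolding P_def tau_def by simp
  qed
  have cflip: "c i (tau j x) = (if i = j then - c i x else c i x)"
    if "i \<in> {1..m}" "j \<in> {1..m}" "x \<in> P" for i j x
  proof (cases "i = j")
    case True then show ?thesis using that unfolding c_def tau_def by (auto simp: transpose_def field_simps)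
  next
    case False
    then have "2*i-1 \<noteq> 2*j-1" "2*i-1 \<noteq> 2*j" "2*i \<noteq> 2*j-1" "2*i \<noteq> 2*j" using that by auto
    then show ?thesis using False unfolding c_def tau_def by (simp add: transpose_def)
  qed
  have mom: "(\<Sum>x\<in>P. 1 * (\<Sum>j=1..m. c j x)^2) = (\<Sum>x\<in>P. 1 * (\<Sum>j=1..m. (c j x)^2)) \<and>
     ((\<forall>x\<in>P. (1::real) \<ge> 0) \<longrightarrow> (\<Sum>x\<in>P. 1 * (\<Sum>j=1..m. c j x)^4) \<le> 3 * (\<Sum>x\<in>P. 1 * (\<Sum>j=1..m. (c j x)^2)^2))"
    using spec[OF moments[where m=m and P=P and tau=tau and c=c and r=m, OF inv cflip order_refl], of "\<lambda>_. 1"] by simp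
  have sumK: "(\<Sum>i\<in>K. g i) = (\<Sum>j=1..m. g (2*j-1) + g (2*j))" for g :: "nat \<Rightarrow> real"
    unfolding K_def km by (rule sum_split_pairs)
  have Xc: "X \<pi> = (\<Sum>j=1..m. c j \<pi>)" if "\<pi> \<in> P" for \<pi>
  proof -
    have "0 = (\<Sum>i\<in>K. q (\<pi> i))" using q0 perm_sum_inv[of \<pi> K q] that unfolding P_def by simp
    also have "\<dots> = X \<pi> + (\<Sum>j=1..m. q (\<pi> (2*j)))" unfolding sumK X_def by (simp add: sum.distrib)
    finally show ?thesis unfolding c_def X_def by (simp add: sum_divide_distrib[symmetric] sum_subtractf)
  qed
  have sq: "(\<Sum>j=1..m. q (\<pi> (2*j-1))^2 + q (\<pi> (2*j))^2) = s" if "\<pi> \<in> P" for \<pi>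
    using sumK[of "\<lambda>i. q (\<pi> i)^2"] perm_sum_inv[of \<pi> K "\<lambda>i. q i^2"] that unfolding P_def s_def by simp
  have Wle: "W \<pi> \<le> s/2" if "\<pi> \<in> P" for \<pi>
  proof -
    have "W \<pi> \<le> (\<Sum>j=1..m. (q (\<pi> (2*j-1))^2 + q (\<pi> (2*j))^2)/2)"
      unfolding W_def c_def by (intro sum_mono) (rule sqhelp)
    also have "\<dots> = s/2" using sq[OF that] by (simp add: sum_divide_distrib[symmetric])
    finally show ?thesis .
  qed
  have W0: "W \<pi> \<ge> 0" for \<pi> unfolding W_def by (auto intro: sum_nonneg)
  have Wexp: "W \<pi> = s/4 - (1/2) * (\<Sum>j=1..m. q (\<pi> (2*j-1)) * q (\<pi> (2*j)))" if "\<pi> \<in> P" for \<pi>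
  proof -
    have "W \<pi> = (\<Sum>j=1..m. (q (\<pi> (2*j-1))^2 + q (\<pi> (2*j))^2)/4 - (1/2) * (q (\<pi> (2*j-1)) * q (\<pi> (2*j))))"
      unfolding W_def c_def by (intro sum.cong) (auto simp: power2_eq_square field_simps)
    also have "\<dots> = s/4 - (1/2) * (\<Sum>j=1..m. q (\<pi> (2*j-1)) * q (\<pi> (2*j)))"
      using sq[OF that] by (simp add: sum_subtractf sum_divide_distrib[symmetric] sum_distrib_left[symmetric])
    finally show ?thesis .
  qed
  have sumW: "(\<Sum>\<pi>\<in>P. W \<pi>) \<ge> real (card P) * s / 4"
  proof -
    have "(\<Sum>\<pi>\<in>P. W \<pi>) = (\<Sum>\<pi>\<in>P. s/4 - (1/2) * (\<Sum>j=1..m. q (\<pi> (2*j-1)) * q (\<pi> (2*j))))"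
      using Wexp by (rule sum.cong[OF refl])
    also have "\<dots> = real (card P) * s / 4 - (1/2) * (\<Sum>j=1..m. \<Sum>\<pi>\<in>P. q (\<pi> (2*j-1)) * q (\<pi> (2*j)))"
      by (simp add: sum_subtractf sum_distrib_left[symmetric] sum_divide_distrib[symmetric] sum.swap[of _ P])
    also have "\<dots> \<ge> real (card P) * s / 4"
    proof -
      have "(\<Sum>j=1..m. \<Sum>\<pi>\<in>P. q (\<pi> (2*j-1)) * q (\<pi> (2*j))) \<le> 0"
      proof (rule sum_nonpos)
        fix j assume j: "j \<in> {1..m}"
        have "2*j-1 \<noteq> 2*j" using j by auto
        then show "(\<Sum>\<pi>\<in>P. q (\<pi> (2*j-1)) * q (\<pi> (2*j))) \<le> 0"
          using pair_neg[OF finK posK[OF j] _ q0] unfolding P_def by blast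
      qed
      then show ?thesis by simp
    qed
    finally show ?thesis .
  qed
  have X2: "(\<Sum>\<pi>\<in>P. X \<pi>^2) = (\<Sum>\<pi>\<in>P. W \<pi>)"
    using mom Xc unfolding W_def by simp
  have X4: "(\<Sum>\<pi>\<in>P. X \<pi>^4) \<le> 3 * (\<Sum>\<pi>\<in>P. W \<pi>^2)"
    using mom Xc unfolding W_def by simp
  have W2: "(\<Sum>\<pi>\<in>P. W \<pi>^2) \<le> s/2 * (\<Sum>\<pi>\<in>P. W \<pi>)"
    unfolding sum_distrib_left
  proof (intro sum_mono)
    fix \<pi> assume "\<pi> \<in> P"
    then have "W \<pi> * W \<pi> \<le> s/2 * W \<pi>" using Wle W0 by (intro mult_right_mono) auto
    then show "W \<pi>^2 \<le> s/2 * W \<pi>" by (simp add: power2_eq_square)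
  qed
  define A where "A = (\<Sum>i\<in>K. \<bar>q i\<bar>)"
  have A: "A > 2 * \<gamma>" using tv unfolding A_def d_TV_def unif_def q_def K_def by simp
  have sA: "s \<ge> A^2 / real k"
  proof -
    have "0 \<le> (\<Sum>i\<in>K. (\<bar>q i\<bar> - A / real k)^2)" by (auto intro: sum_nonneg)
    also have "\<dots> = (\<Sum>i\<in>K. q i ^2 - 2 * (A / real k) * \<bar>q i\<bar> + (A / real k)^2)"
      by (intro sum.cong) (auto simp: power2_diff)
    also have "\<dots> = s - 2 * (A / real k) * A + real k * (A/real k)^2"
      unfolding s_def A_def sum.distrib sum_subtractf sum_distrib_left[symmetric] by (simp add: K_def)
    also have "\<dots> = s - A^2 / real k" using kpos by (simp add: power2_eq_square field_simps)
    finally show ?thesis by simp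
  qed
  have t2: "t^2 = \<gamma>^2 / (5 * real k)" unfolding t_def using kpos by (simp add: power_divide)
  have tpos: "t > 0" unfolding t_def using gpos kpos by simp
  have sbig: "20 * t^2 < s"
  proof -
    have "A^2 > (2*\<gamma>)^2" using A gpos by (intro power_strict_mono) auto
    then have a1: "4 * \<gamma>^2 < A^2" by (simp add: power_mult_distrib)
    have a2: "A^2 \<le> s * real k" using sA kpos by (simp add: field_simps)
    have a3: "real k * (5 * t^2) = \<gamma>^2" using t2 kpos by (simp add: field_simps)
    have "real k * (20 * t^2) < real k * s" using a1 a2 a3 by (simp add: algebra_simps)
    then show ?thesis using kpos by simp
  qed
  have spos: "s > 0" using sbig tpos by (smt (verit) zero_less_power)
  \<comment> \<open>Paley-Zygmund\<close>
  define G where "G = card {\<pi>\<in>P. \<bar>X \<pi>\<bar> > t}"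
  define l where "l = 2 / (3 * s)"
  have lpos: "l > 0" unfolding l_def using spos by simp
  have pw: "X \<pi>^2 \<le> t^2 + l/2 * X \<pi>^4 + (if \<bar>X \<pi>\<bar> > t then 1/(2*l) else 0)" for \<pi>
  proof (cases "\<bar>X \<pi>\<bar> > t")
    case True
    have "0 \<le> (l * X \<pi>^2 - 1)^2" by simp
    then have "2 * l * X \<pi>^2 \<le> l^2 * X \<pi>^4 + 1" by (simp add: power2_eq_square algebra_simps power4_eq_xxxx)
    then have "X \<pi>^2 \<le> l/2 * X \<pi>^4 + 1/(2*l)" using lpos by (simp add: field_simps power2_eq_square)
    moreover have "0 \<le> t^2" by simp
    ultimately have "X \<pi>^2 \<le> t^2 + l/2 * X \<pi>^4 + 1/(2*l)" by linarith
    then show ?thesis using True by simp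
  next
    case False
    then have "X \<pi>^2 \<le> t^2" using tpos by (metis abs_le_square_iff abs_of_pos not_less)
    moreover have "0 \<le> l/2 * X \<pi>^4" using lpos by simp
    ultimately show ?thesis using False by simp
  qed
  have sumif: "(\<Sum>\<pi>\<in>P. (if \<bar>X \<pi>\<bar> > t then 1/(2*l) else 0)) = real G / (2*l)"
    unfolding G_def using sum.inter_filter[OF finP, of "\<lambda>_. 1/(2*l)" "\<lambda>\<pi>. \<bar>X \<pi>\<bar> > t", symmetric]
    by simp
  have "(\<Sum>\<pi>\<in>P. X \<pi>^2) \<le> (\<Sum>\<pi>\<in>P. t^2 + l/2 * X \<pi>^4 + (if \<bar>X \<pi>\<bar> > t then 1/(2*l) else 0))"
    by (rule sum_mono) (rule pw)
  also have "\<dots> = real (card P) * t^2 + l/2 * (\<Sum>\<pi>\<in>P. X \<pi>^4) + real G / (2*l)"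
    by (simp add: sum.distrib sum_distrib_left sumif)
  finally have PZ: "(\<Sum>\<pi>\<in>P. W \<pi>) \<le> real (card P) * t^2 + l/2 * (\<Sum>\<pi>\<in>P. X \<pi>^4) + real G / (2*l)"
    using X2 by simp
  have "l/2 * (\<Sum>\<pi>\<in>P. X \<pi>^4) \<le> l/2 * (3 * (s/2 * (\<Sum>\<pi>\<in>P. W \<pi>)))"
    using X4 W2 lpos by (intro mult_left_mono) auto
  also have "\<dots> = (\<Sum>\<pi>\<in>P. W \<pi>) / 2" unfolding l_def using spos by simp
  finally have l4: "l/2 * (\<Sum>\<pi>\<in>P. X \<pi>^4) \<le> (\<Sum>\<pi>\<in>P. W \<pi>) / 2" .
  have "(\<Sum>\<pi>\<in>P. W \<pi>) / 2 \<le> real (card P) * t^2 + real G * (3 * s / 4)"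
  proof -
    have "real G / (2*l) = real G * (3 * s / 4)" unfolding l_def using spos by (simp add: field_simps)
    then show ?thesis using PZ l4 by linarith
  qed
  then have "real (card P) * s / 8 \<le> real (card P) * t^2 + real G * (3 * s / 4)"
    using sumW by linarith
  moreover have "real (card P) * t^2 < real (card P) * (s / 20)" using NP sbig by simp
  ultimately have "real (card P) * (3 * s / 40) < real G * (3 * s / 4)" by (simp add: field_simps)
  then have Gbig: "real G / real (card P) > 1/10" using spos NP by (simp add: field_simps)
  define T where "T = {S. S \<subseteq> K \<and> card S = m}"
  define Sf where "Sf \<pi> = (\<lambda>j. \<pi> (2*j-1)) ` {1..m}" for \<pi> :: "nat \<Rightarrow> nat"
  define E where "E = {S. \<bar>pset p S - 1/2\<bar> > t}"
  define fib where "fib S = {\<pi>\<in>P. Sf \<pi> = S}" for S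
  have finT: "finite T" unfolding T_def using finK by (auto intro: finite_subset[of _ "Pow K"])
  have injS: "inj_on (\<lambda>j. \<pi> (2*j-1)) {1..m}" if "\<pi> \<in> P" for \<pi>
  proof
    fix x y assume x: "x \<in> {1..m}" and y: "y \<in> {1..m}" and e: "\<pi> (2*x-1) = \<pi> (2*y-1)"
    have "inj \<pi>" using that unfolding P_def by (simp add: permutes_inj)
    then have "2*x-1 = 2*y-1" using e by (simp add: inj_eq)
    then show "x = y" using x y by auto
  qed
  have SfT: "Sf \<pi> \<in> T" if "\<pi> \<in> P" for \<pi>
  proof -
    have "Sf \<pi> \<subseteq> K" unfolding Sf_def using posK that unfolding P_def
      by (auto intro: permutes_in_image[THEN iffD2])
    moreover have "card (Sf \<pi>) = m" unfolding Sf_def using card_image[OF injS[OF that]] by simp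
    ultimately show ?thesis unfolding T_def by simp
  qed
  have XS: "pset p (Sf \<pi>) - 1/2 = X \<pi>" if "\<pi> \<in> P" for \<pi>
  proof -
    have "pset p (Sf \<pi>) = (\<Sum>j=1..m. p (\<pi> (2*j-1)))"
      unfolding pset_def Sf_def sum.reindex[OF injS[OF that]] by (simp add: o_def)
    also have "\<dots> = X \<pi> + real m * (1/real k)" unfolding X_def q_def by (simp add: sum_subtractf)
    also have "real m * (1/real k) = 1/2" using km m1 by simp
    finally show ?thesis by simp
  qed
  have fibfin: "finite (fib S)" for S unfolding fib_def using finP by simp
  have fible: "card (fib S) \<le> card (fib S')" if "S \<in> T" "S' \<in> T" for S S'
  proof -
    have "S \<subseteq> K" "S' \<subseteq> K" "card S = card S'" using that unfolding T_def by auto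
    from exists_perm_image[OF finK this] obtain \<sigma> where \<sigma>: "\<sigma> permutes K" "\<sigma> ` S = S'"
      by blast
    have injs: "inj \<sigma>" using permutes_inj[OF \<sigma>(1)] .
    have "inj_on ((\<circ>) \<sigma>) (fib S)"
    proof (rule inj_onI)
      fix x y :: "nat \<Rightarrow> nat" assume "\<sigma> \<circ> x = \<sigma> \<circ> y"
      then have "\<sigma> (x i) = \<sigma> (y i)" for i by (metis comp_apply)
      then have "x i = y i" for i using injs by (simp add: inj_eq)
      then show "x = y" by blast
    qed
    moreover have "(\<circ>) \<sigma> ` fib S \<subseteq> fib S'"
    proof
      fix \<rho> assume "\<rho> \<in> (\<circ>) \<sigma> ` fib S"
      then obtain \<pi> where \<pi>: "\<pi> \<in> fib S" and r: "\<rho> = \<sigma> \<circ> \<pi>" by blast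
      have pp: "\<pi> permutes K" and sp: "Sf \<pi> = S" using \<pi> unfolding fib_def P_def by auto
      have "\<rho> permutes K" unfolding r by (rule permutes_compose[OF pp \<sigma>(1)])
      moreover have "Sf \<rho> = \<sigma> ` Sf \<pi>" unfolding r Sf_def by (simp add: image_image)
      ultimately show "\<rho> \<in> fib S'" unfolding fib_def P_def using sp \<sigma>(2) by simp
    qed
    ultimately show ?thesis by (rule card_inj_on_le[OF _ _ fibfin])
  qed
  define S0 where "S0 = Sf id"
  have S0T: "S0 \<in> T" unfolding S0_def using SfT[OF idP] .
  define Nf where "Nf = card (fib S0)"
  have fibN: "card (fib S) = Nf" if "S \<in> T" for S
    using fible[OF that S0T] fible[OF S0T that] unfolding Nf_def by simp
  have "id \<in> fib S0" unfolding fib_def S0_def using idP by simp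
  then have Nfpos: "Nf > 0" unfolding Nf_def using fibfin[of S0] card_gt_0_iff by blast
  have cP: "card P = Nf * card T"
  proof -
    have "card P = (\<Sum>S\<in>T. card {\<pi>. \<pi> \<in> P \<and> Sf \<pi> = S})"
    proof -
      have img: "Sf ` P \<subseteq> T" using SfT by blast
      show ?thesis using sum.group[OF finP finT img, of "\<lambda>_. 1::nat"] by simp
    qed
    also have "\<dots> = (\<Sum>S\<in>T. Nf)" using fibN unfolding fib_def by (intro sum.cong) auto
    finally show ?thesis by simp
  qed
  have cG: "G = Nf * card (T \<inter> E)"
  proof -
    have eqs: "{\<pi>\<in>P. \<bar>X \<pi>\<bar> > t} = {\<pi>\<in>P. Sf \<pi> \<in> T \<inter> E}"
      using XS SfT unfolding E_def by auto
    have "G = (\<Sum>S\<in>T \<inter> E. card {\<pi>. \<pi> \<in> {\<pi>\<in>P. Sf \<pi> \<in> T \<inter> E} \<and> Sf \<pi> = S})"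
    proof -
      have f1: "finite {\<pi>\<in>P. Sf \<pi> \<in> T \<inter> E}" using finP by simp
      have f2: "finite (T \<inter> E)" using finT by simp
      have img: "Sf ` {\<pi>\<in>P. Sf \<pi> \<in> T \<inter> E} \<subseteq> T \<inter> E" by blast
      show ?thesis unfolding G_def eqs using sum.group[OF f1 f2 img, of "\<lambda>_. 1::nat"] by simp
    qed
    also have "\<dots> = (\<Sum>S\<in>T \<inter> E. Nf)"
    proof (intro sum.cong refl)
      fix S assume S: "S \<in> T \<inter> E"
      then have "{\<pi>. \<pi> \<in> {\<pi>\<in>P. Sf \<pi> \<in> T \<inter> E} \<and> Sf \<pi> = S} = fib S" unfolding fib_def by auto
      then show "card {\<pi>. \<pi> \<in> {\<pi>\<in>P. Sf \<pi> \<in> T \<inter> E} \<and> Sf \<pi> = S} = Nf" using fibN S by simp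
    qed
    finally show ?thesis by simp
  qed
  have Tne: "T \<noteq> {}" using S0T by auto
  have "measure_pmf.prob (rand_subset k (k div 2)) E = real (card (T \<inter> E)) / real (card T)"
    unfolding rand_subset_def m_def[symmetric] K_def[symmetric] T_def[symmetric]
    using measure_pmf_of_set[OF Tne finT] by simp
  also have "\<dots> = real G / real (card P)" unfolding cG cP using Nfpos by simp
  finally have "measure_pmf.prob (rand_subset k (k div 2)) E > 1/10" using Gbig by simp
  then show ?thesis unfolding E_def t_def by simp
qed
end
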